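(* Let $\mathcal{R}$ be a field and $(\mathcal{C}^{\bullet},\partial)$ a bigraded cochain complex of $\mathcal{R}$-vector spaces as in the context. Then \[ B^{k}(\mathcal{C},\partial)\cong\bigoplus_{p+q=k}\mathcal{B}^{k}_{q}\cap\mathcal{C}^{p,q},\qquad Z^{k}(\mathcal{C},\partial)\cong\bigoplus_{p+q=k}\mathcal{Z}^{k}_{q}\cap\mathcal{C}^{p,q},\qquad H^{k}(\mathcal{C},\partial)\cong\bigoplus_{p+q=k}\frac{\mathcal{Z}^{k}_{q}\cap\mathcal{C}^{p,q}}{\mathcal{B}^{k}_{q}\cap\mathcal{C}^{p,q}}. \]
   Context: Setting: $\mathcal{C}^{k}=\bigoplus_{p+q=k}\mathcal{C}^{p,q}$ with $\mathcal{C}^{p,q}=\{0\}$ if $p<0$ or $q<0$; $\partial$ is linear of degree $1$, $\partial^{2}=0$, $\partial=\partial_{2,-1}+\partial_{1,0}+\partial_{0,1}$ with $\partial_{i,j}(\mathcal{C}^{p,q})\subseteq\mathcal{C}^{p+i,q+j}$. $G^{q}\mathcal{C}:=\bigoplus_{j\geq q}\mathcal{C}^{i,j}$ and $\pi_{q}:\mathcal{C}\to G^{q}\mathcal{C}$ is the projection along the bigrading. $\mathcal{N}^{p,q}:=\ker(\partial_{0,1}|_{\mathcal{C}^{p,q}})\cap\ker(\partial_{2,-1}|_{\mathcal{C}^{p,q}})$, $\mathcal{N}_{q}:=\bigoplus_{p}\mathcal{N}^{p-q,q}$ (degree-$m$ part $\mathcal{N}^{m-q,q}$), a subcomplex with differential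 $\overline{\partial}:=\partial|_{\mathcal{N}_q}$. $\mathcal{M}^{k}:=\{\eta\in\mathcal{C}^{k}\mid(\partial\eta)_{i,j}\in B^{k+1}(\mathcal{N}_{j},\overline{\partial})\ \forall\, i+j=k+1\}$, where $(\partial\eta)_{i,j}$ is the $\mathcal{C}^{i,j}$-component; $\mathcal{Z}^{k}_{q}:=\{\pi_{q}(\eta)\mid\eta\in\mathcal{M}^{k},\ \pi_{q}(\partial\eta)=0\}$; $\mathcal{B}^{k}_{q}:=\pi_{q}(B^{k}(\mathcal{C},\partial))$. *)

theory Defs
  imports Complex_Main "HOL-Library.Function_Algebras"
begin

text \<open>A vector space structure over 'r: (carrier, addition, zero, scalar multiplication).\<close>
type_synonym ('r, 'e) vs = "'e set \<times> ('e \<Rightarrow> 'e \<Rightarrow> 'e) \<times> 'e \<times> ('r \<Rightarrow> 'e \<Rightarrow> 'e)"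

definition iso_vs :: "('r, 'a) vs \<Rightarrow> ('r, 'b) vs \<Rightarrow> bool" where
  "iso_vs V W = (case V of (A, addA, zA, scA) \<Rightarrow> case W of (B, addB, zB, scB) \<Rightarrow>
     (\<exists>f. bij_betw f A B \<and> (\<forall>x\<in>A. \<forall>y\<in>A. f (addA x y) = addB (f x) (f y))
          \<and> (\<forall>c. \<forall>x\<in>A. f (scA c x) = scB c (f x))))"

definition vs_sub :: "('r \<Rightarrow> 'e \<Rightarrow> 'e) \<Rightarrow> 'e set \<Rightarrow> ('r, 'e::ab_group_add) vs" where
  "vs_sub sc U = (U, (+), 0, sc)"

definition coset :: "'e::ab_group_add \<Rightarrow> 'e set \<Rightarrow> 'e set" where
  "coset x Y = (\<lambda>y. x + y) ` Y"

definition vs_quot :: "('r \<Rightarrow> 'e \<Rightarrow> 'e) \<Rightarrow> 'e set \<Rightarrow> 'e set \<Rightarrow> ('r, 'e::ab_group_add set) vs" where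
  "vs_quot sc X Y = ((\<lambda>x. coset x Y) ` X,
     (\<lambda>S T. {s + t | s t. s \<in> S \<and> t \<in> T}),
     Y,
     (\<lambda>c S. {sc c s + y | s y. s \<in> S \<and> y \<in> Y}))"

definition vs_dsum :: "nat set \<Rightarrow> (nat \<Rightarrow> ('r, 'e) vs) \<Rightarrow> ('r, nat \<Rightarrow> 'e) vs" where
  "vs_dsum I F = ({f. (\<forall>i\<in>I. f i \<in> fst (F i)) \<and> (\<forall>i. i \<notin> I \<longrightarrow> f i = undefined)},
     (\<lambda>f g i. if i \<in> I then fst (snd (F i)) (f i) (g i) else undefined),
     (\<lambda>i. if i \<in> I then fst (snd (snd (F i))) else undefined),
     (\<lambda>c f i. if i \<in> I then snd (snd (snd (F i))) c (f i) else undefined))"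

text \<open>The total space C = (+)_{p,q>=0} C^{p,q} is modelled as finitely supported families
  x :: nat => nat => 'v with x p q in C^{p,q}, where each C^{p,q} is a subspace of an
  ambient R-vector space 'v.  Negative bidegrees are zero (indices are nat).\<close>

definition scaleC :: "('r \<Rightarrow> 'v \<Rightarrow> 'v) \<Rightarrow> 'r \<Rightarrow> (nat \<Rightarrow> nat \<Rightarrow> 'v) \<Rightarrow> nat \<Rightarrow> nat \<Rightarrow> 'v" where
  "scaleC sc c x = (\<lambda>p q. sc c (x p q))"

definition tot :: "(nat \<Rightarrow> nat \<Rightarrow> 'v::zero set) \<Rightarrow> (nat \<Rightarrow> nat \<Rightarrow> 'v) set" where
  "tot Cs = {x. finite {(p, q). x p q \<noteq> 0} \<and> (\<forall>p q. x p q \<in> Cs p q)}"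

definition single :: "nat \<Rightarrow> nat \<Rightarrow> 'v::zero \<Rightarrow> nat \<Rightarrow> nat \<Rightarrow> 'v" where
  "single p q v = (\<lambda>p' q'. if p' = p \<and> q' = q then v else 0)"

definition Cpq :: "(nat \<Rightarrow> nat \<Rightarrow> 'v::zero set) \<Rightarrow> nat \<Rightarrow> nat \<Rightarrow> (nat \<Rightarrow> nat \<Rightarrow> 'v) set" where
  "Cpq Cs p q = {x \<in> tot Cs. \<forall>p' q'. (p', q') \<noteq> (p, q) \<longrightarrow> x p' q' = 0}"

definition Ck :: "(nat \<Rightarrow> nat \<Rightarrow> 'v::zero set) \<Rightarrow> nat \<Rightarrow> (nat \<Rightarrow> nat \<Rightarrow> 'v) set" where
  "Ck Cs k = {x \<in> tot Cs. \<forall>p q. x p q \<noteq> 0 \<longrightarrow> p + q = k}"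

text \<open>The bihomogeneous component partial_{i,j} of d: on C^{p,q} it is the C^{p+i,q+j}-component of d.\<close>
definition dij :: "((nat \<Rightarrow> nat \<Rightarrow> 'v::zero) \<Rightarrow> nat \<Rightarrow> nat \<Rightarrow> 'v) \<Rightarrow> int \<Rightarrow> int
    \<Rightarrow> (nat \<Rightarrow> nat \<Rightarrow> 'v) \<Rightarrow> nat \<Rightarrow> nat \<Rightarrow> 'v" where
  "dij d i j x = (\<lambda>p q. if i \<le> int p \<and> j \<le> int q
      then d (single (nat (int p - i)) (nat (int q - j)) (x (nat (int p - i)) (nat (int q - j)))) p q
      else 0)"

definition bigraded_complex :: "('r::field \<Rightarrow> 'v::ab_group_add \<Rightarrow> 'v) \<Rightarrow> (nat \<Rightarrow> nat \<Rightarrow> 'v set)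
    \<Rightarrow> ((nat \<Rightarrow> nat \<Rightarrow> 'v) \<Rightarrow> nat \<Rightarrow> nat \<Rightarrow> 'v) \<Rightarrow> bool" where
  "bigraded_complex sc Cs d \<longleftrightarrow>
     vector_space sc
   \<and> (\<forall>p q. 0 \<in> Cs p q \<and> (\<forall>x\<in>Cs p q. \<forall>y\<in>Cs p q. x + y \<in> Cs p q) \<and> (\<forall>c. \<forall>x\<in>Cs p q. sc c x \<in> Cs p q))
   \<and> (\<forall>x \<in> tot Cs. d x \<in> tot Cs)
   \<and> (\<forall>x \<in> tot Cs. \<forall>y \<in> tot Cs. d (x + y) = d x + d y)
   \<and> (\<forall>c. \<forall>x \<in> tot Cs. d (scaleC sc c x) = scaleC sc c (d x))
   \<and> (\<forall>k. \<forall>x \<in> Ck Cs k. d x \<in> Ck Cs (Suc k))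
   \<and> (\<forall>x \<in> tot Cs. d (d x) = 0)
   \<and> (\<forall>p q. \<forall>x \<in> Cpq Cs p q. \<forall>p' q'. d x p' q' \<noteq> 0 \<longrightarrow>
        (p' = p + 2 \<and> Suc q' = q) \<or> (p' = Suc p \<and> q' = q) \<or> (p' = p \<and> q' = Suc q))"

definition Npq :: "(nat \<Rightarrow> nat \<Rightarrow> 'v::zero set) \<Rightarrow> ((nat \<Rightarrow> nat \<Rightarrow> 'v) \<Rightarrow> nat \<Rightarrow> nat \<Rightarrow> 'v)
    \<Rightarrow> nat \<Rightarrow> nat \<Rightarrow> (nat \<Rightarrow> nat \<Rightarrow> 'v) set" where
  "Npq Cs d p q = {x \<in> Cpq Cs p q. dij d 0 1 x = 0 \<and> dij d 2 (-1) x = 0}"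

definition Nq_deg :: "(nat \<Rightarrow> nat \<Rightarrow> 'v::zero set) \<Rightarrow> ((nat \<Rightarrow> nat \<Rightarrow> 'v) \<Rightarrow> nat \<Rightarrow> nat \<Rightarrow> 'v)
    \<Rightarrow> nat \<Rightarrow> nat \<Rightarrow> (nat \<Rightarrow> nat \<Rightarrow> 'v) set" where
  "Nq_deg Cs d q m = (if q \<le> m then Npq Cs d (m - q) q else {0})"

definition BN :: "(nat \<Rightarrow> nat \<Rightarrow> 'v::zero set) \<Rightarrow> ((nat \<Rightarrow> nat \<Rightarrow> 'v) \<Rightarrow> nat \<Rightarrow> nat \<Rightarrow> 'v)
    \<Rightarrow> nat \<Rightarrow> nat \<Rightarrow> (nat \<Rightarrow> nat \<Rightarrow> 'v) set" where
  "BN Cs d q m = (if m = 0 then {0} else d ` Nq_deg Cs d q (m - 1))"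

definition Mk :: "(nat \<Rightarrow> nat \<Rightarrow> 'v::zero set) \<Rightarrow> ((nat \<Rightarrow> nat \<Rightarrow> 'v) \<Rightarrow> nat \<Rightarrow> nat \<Rightarrow> 'v)
    \<Rightarrow> nat \<Rightarrow> (nat \<Rightarrow> nat \<Rightarrow> 'v) set" where
  "Mk Cs d k = {\<eta> \<in> Ck Cs k. \<forall>i j. i + j = Suc k \<longrightarrow> single i j (d \<eta> i j) \<in> BN Cs d j (Suc k)}"

definition piq :: "nat \<Rightarrow> (nat \<Rightarrow> nat \<Rightarrow> 'v::zero) \<Rightarrow> nat \<Rightarrow> nat \<Rightarrow> 'v" where
  "piq q x = (\<lambda>p j. if q \<le> j then x p j else 0)"

definition Zkq :: "(nat \<Rightarrow> nat \<Rightarrow> 'v::zero set) \<Rightarrow> ((nat \<Rightarrow> nat \<Rightarrow> 'v) \<Rightarrow> nat \<Rightarrow> nat \<Rightarrow> 'v)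
    \<Rightarrow> nat \<Rightarrow> nat \<Rightarrow> (nat \<Rightarrow> nat \<Rightarrow> 'v) set" where
  "Zkq Cs d k q = {piq q \<eta> | \<eta>. \<eta> \<in> Mk Cs d k \<and> piq q (d \<eta>) = 0}"

text \<open>B^k(C) = d(C^{k-1}) (with C^{-1} = 0) and Z^k(C).\<close>
definition Bk :: "(nat \<Rightarrow> nat \<Rightarrow> 'v::zero set) \<Rightarrow> ((nat \<Rightarrow> nat \<Rightarrow> 'v) \<Rightarrow> nat \<Rightarrow> nat \<Rightarrow> 'v)
    \<Rightarrow> nat \<Rightarrow> (nat \<Rightarrow> nat \<Rightarrow> 'v) set" where
  "Bk Cs d k = {d x | x. x \<in> tot Cs \<and> (\<forall>p q. x p q \<noteq> 0 \<longrightarrow> Suc (p + q) = k)}"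

definition Zk :: "(nat \<Rightarrow> nat \<Rightarrow> 'v::zero set) \<Rightarrow> ((nat \<Rightarrow> nat \<Rightarrow> 'v) \<Rightarrow> nat \<Rightarrow> nat \<Rightarrow> 'v)
    \<Rightarrow> nat \<Rightarrow> (nat \<Rightarrow> nat \<Rightarrow> 'v) set" where
  "Zk Cs d k = {x \<in> Ck Cs k. d x = 0}"

definition Bkq :: "(nat \<Rightarrow> nat \<Rightarrow> 'v::zero set) \<Rightarrow> ((nat \<Rightarrow> nat \<Rightarrow> 'v) \<Rightarrow> nat \<Rightarrow> nat \<Rightarrow> 'v)
    \<Rightarrow> nat \<Rightarrow> nat \<Rightarrow> (nat \<Rightarrow> nat \<Rightarrow> 'v) set" where
  "Bkq Cs d k q = piq q ` Bk Cs d k"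

end

theory Submission
  imports Defs
begin


lemma sum_fun_apply2: "(\<Sum>i\<in>A. f i) a = (\<Sum>i\<in>A. f i a)"
  by (induction A rule: infinite_finite_induct) auto

definition dcar :: "nat \<Rightarrow> (nat \<Rightarrow> 'e set) \<Rightarrow> (nat \<Rightarrow> 'e) set" where
  "dcar k G = {w. (\<forall>i\<in>{..k}. w i \<in> G i) \<and> (\<forall>i. i \<notin> {..k} \<longrightarrow> w i = undefined)}"

context vector_space begin

lemma section_exists:
  assumes lf: "Vector_Spaces.linear scale scale f" and X: "subspace X" and X': "subspace X'" and XX: "X' \<subseteq> X"
  shows "\<exists>g. Vector_Spaces.linear scale scale g \<and> (\<forall>w\<in>f ` X. g w \<in> X \<and> f (g w) = w) \<and> (\<forall>u\<in>f ` X'. g u \<in> X')"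
proof -
  interpret P: vector_space_pair scale scale ..
  obtain BU where BU: "BU \<subseteq> f ` X'" "independent BU" "f ` X' \<subseteq> span BU"
    using maximal_independent_subset by blast
  have "BU \<subseteq> f ` X" using BU(1) image_mono[OF XX] by (rule subset_trans)
  then obtain BW where BW: "BU \<subseteq> BW" "BW \<subseteq> f ` X" "independent BW" "f ` X \<subseteq> span BW"
    using maximal_independent_subset_extend[of BU "f ` X"] BU by blast
  define h where "h b = (if b \<in> BU then (SOME x. x \<in> X' \<and> f x = b) else (SOME x. x \<in> X \<and> f x = b))" for b
  have hU: "h b \<in> X' \<and> f (h b) = b" if "b \<in> BU" for b
  proof -
    from that BU obtain x where "x \<in> X'" "f x = b" by auto
    then show ?thesis unfolding h_def using that by (auto intro: someI2)
  qed
  have hW: "h b \<in> X \<and> f (h b) = b" if "b \<in> BW" for b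
  proof (cases "b \<in> BU")
    case True then show ?thesis using hU XX by auto
  next
    case False
    from that BW obtain x where "x \<in> X" "f x = b" by auto
    then show ?thesis unfolding h_def using False by (auto intro: someI2)
  qed
  define g where "g = P.construct BW h"
  have lg: "Vector_Spaces.linear scale scale g" unfolding g_def by (rule P.linear_construct[OF BW(3)])
  have gb: "g b = h b" if "b \<in> BW" for b unfolding g_def by (rule P.construct_basis[OF BW(3) that])
  have 1: "g w \<in> X" for w
  proof -
    have "g w \<in> span (h ` BW)" unfolding g_def by (rule P.construct_in_span[OF BW(3)])
    moreover have "span (h ` BW) \<subseteq> X" using hW X by (intro span_minimal) auto
    ultimately show ?thesis by auto
  qed
  have 2: "f (g w) = w" if "w \<in> f ` X" for w
  proof -
    have "(f \<circ> g) w = id w"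
    proof (rule P.linear_eq_on[where B=BW and f="f \<circ> g" and g=id])
      show "Vector_Spaces.linear scale scale (f \<circ> g)" by (rule Vector_Spaces.linear_compose[OF lg lf])
      show "Vector_Spaces.linear scale scale id" by (rule linear_id)
      show "w \<in> span BW" using that BW by auto
      show "(f \<circ> g) b = id b" if "b \<in> BW" for b using gb[OF that] hW[OF that] by simp
    qed
    then show ?thesis by simp
  qed
  have 3: "g u \<in> X'" if "u \<in> f ` X'" for u
  proof -
    have "u \<in> span BU" using that BU by auto
    then have "g u \<in> g ` span BU" by auto
    also have "g ` span BU = span (g ` BU)" by (rule P.linear_span_image[OF lg, symmetric])
    also have "\<dots> \<subseteq> X'" using hU gb BW(1) X' by (intro span_minimal) auto
    finally show ?thesis .
  qed
  show ?thesis using lg 1 2 3 by blast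
qed

lemma filt_core:
  fixes F FB :: "nat \<Rightarrow> 'b set" and \<phi> :: "nat \<Rightarrow> 'b \<Rightarrow> 'b" and k :: nat
  assumes subF: "\<And>p. subspace (F p)" and subFB: "\<And>p. subspace (FB p)"
    and lin: "\<And>p. Vector_Spaces.linear scale scale (\<phi> p)"
    and mono: "\<And>p. F (Suc p) \<subseteq> F p"
    and FB: "\<And>p. FB p = F p \<inter> FB 0"
    and top: "F (Suc k) = {0}"
    and ker: "\<And>p z. z \<in> F p \<Longrightarrow> \<phi> p z = 0 \<longleftrightarrow> z \<in> F (Suc p)"
  shows "\<exists>\<Psi>. bij_betw \<Psi> (dcar k (\<lambda>p. \<phi> p ` F p)) (F 0)
     \<and> (\<forall>w\<in>dcar k (\<lambda>p. \<phi> p ` F p). \<forall>w'\<in>dcar k (\<lambda>p. \<phi> p ` F p).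
           \<Psi> (\<lambda>i. if i \<in> {..k} then w i + w' i else undefined) = \<Psi> w + \<Psi> w')
     \<and> (\<forall>c. \<forall>w\<in>dcar k (\<lambda>p. \<phi> p ` F p). \<Psi> (\<lambda>i. if i \<in> {..k} then scale c (w i) else undefined) = scale c (\<Psi> w))
     \<and> (\<forall>w\<in>dcar k (\<lambda>p. \<phi> p ` F p). \<Psi> w \<in> FB 0 \<longleftrightarrow> (\<forall>p\<in>{..k}. w p \<in> \<phi> p ` FB p))"
proof -
  interpret P: vector_space_pair scale scale ..
  have FBF: "FB p \<subseteq> F p" for p using FB[of p] by blast
  have "\<forall>p. \<exists>g. Vector_Spaces.linear scale scale g \<and> (\<forall>w\<in>\<phi> p ` F p. g w \<in> F p \<and> \<phi> p (g w) = w) \<and> (\<forall>u\<in>\<phi> p ` FB p. g u \<in> FB p)"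
    using section_exists[OF lin subF subFB FBF] by blast
  then obtain \<sigma> where \<sigma>: "\<And>p. Vector_Spaces.linear scale scale (\<sigma> p)"
    "\<And>p w. w \<in> \<phi> p ` F p \<Longrightarrow> \<sigma> p w \<in> F p"
    "\<And>p w. w \<in> \<phi> p ` F p \<Longrightarrow> \<phi> p (\<sigma> p w) = w"
    "\<And>p u. u \<in> \<phi> p ` FB p \<Longrightarrow> \<sigma> p u \<in> FB p"
    by metis
  have anti: "F q \<subseteq> F p" if "p \<le> q" for p q
    using lift_Suc_antimono_le[of F, OF mono that] .
  have phi0: "\<phi> p z = 0" if "z \<in> F q" "p < q" for p q z
  proof -
    have "z \<in> F (Suc p)" using anti[of "Suc p" q] that by auto
    moreover have "z \<in> F p" using anti[of p q] that by auto
    ultimately show ?thesis using ker by auto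
  qed
  have subG: "subspace (\<phi> p ` F p)" for p by (rule P.linear_subspace_image[OF lin subF])
  have dec: "\<exists>w. (\<forall>q\<in>{p..k}. w q \<in> \<phi> q ` H q) \<and> z = (\<Sum>q\<in>{p..k}. \<sigma> q (w q))"
    if H: "\<And>p. subspace (H p)" "H (Suc k) = {0}" "\<And>p z. z \<in> H p \<Longrightarrow> \<phi> p z = 0 \<Longrightarrow> z \<in> H (Suc p)"
       "\<And>p w. w \<in> \<phi> p ` H p \<Longrightarrow> \<sigma> p w \<in> H p" "\<And>p w. w \<in> \<phi> p ` H p \<Longrightarrow> \<phi> p (\<sigma> p w) = w"
       and p: "p \<le> Suc k" and z: "z \<in> H p" for H p z
    using p z
  proof (induction p arbitrary: z rule: inc_induct)
    case base
    then show ?case using H(2) by auto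
  next
    case (step n)
    define a where "a = \<phi> n z"
    have a: "a \<in> \<phi> n ` H n" using step a_def by auto
    define z' where "z' = z - \<sigma> n a"
    have "z' \<in> H n" unfolding z'_def using step.prems H(1) H(4)[OF a] by (auto intro: subspace_diff)
    moreover have "\<phi> n z' = 0" unfolding z'_def using P.linear_diff[OF lin] H(5)[OF a] a_def by simp
    ultimately have "z' \<in> H (Suc n)" using H(3) by auto
    from step.IH[OF this] obtain w where w: "\<forall>q\<in>{Suc n..k}. w q \<in> \<phi> q ` H q" "z' = (\<Sum>q\<in>{Suc n..k}. \<sigma> q (w q))" by blast
    define w2 where "w2 = w(n := a)"
    have nk: "n \<le> k" using step by auto
    have "(\<Sum>q\<in>{n..k}. \<sigma> q (w2 q)) = \<sigma> n (w2 n) + (\<Sum>q\<in>{Suc n..k}. \<sigma> q (w2 q))"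
      by (rule sum.atLeast_Suc_atMost[OF nk])
    also have "(\<Sum>q\<in>{Suc n..k}. \<sigma> q (w2 q)) = (\<Sum>q\<in>{Suc n..k}. \<sigma> q (w q))"
      by (rule sum.cong) (auto simp: w2_def)
    finally have "(\<Sum>q\<in>{n..k}. \<sigma> q (w2 q)) = z" using w(2) z'_def by (simp add: w2_def) (metis add.commute diff_add_cancel)
    moreover have "\<forall>q\<in>{n..k}. w2 q \<in> \<phi> q ` H q"
    proof
      fix q assume "q \<in> {n..k}"
      then consider "q = n" | "q \<in> {Suc n..k}" by force
      then show "w2 q \<in> \<phi> q ` H q" using a w(1) by cases (auto simp: w2_def)
    qed
    ultimately show ?case by metis
  qed
  have inj: "\<forall>q\<in>{p..k}. w q = 0"
    if p: "p \<le> Suc k" and w: "\<forall>q\<in>{p..k}. w q \<in> \<phi> q ` F q" and s: "(\<Sum>q\<in>{p..k}. \<sigma> q (w q)) = 0" for p w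
    using p w s
  proof (induction p rule: inc_induct)
    case base
    then show ?case by auto
  next
    case (step n)
    have nk: "n \<le> k" using step by auto
    have S: "(\<Sum>q\<in>{n..k}. \<sigma> q (w q)) = \<sigma> n (w n) + (\<Sum>q\<in>{Suc n..k}. \<sigma> q (w q))"
      by (rule sum.atLeast_Suc_atMost[OF nk])
    have "\<phi> n (\<Sum>q\<in>{n..k}. \<sigma> q (w q)) = \<phi> n (\<sigma> n (w n)) + (\<Sum>q\<in>{Suc n..k}. \<phi> n (\<sigma> q (w q)))"
      unfolding S P.linear_add[OF lin] P.linear_sum[OF lin] ..
    also have "(\<Sum>q\<in>{Suc n..k}. \<phi> n (\<sigma> q (w q))) = 0"
    proof (rule sum.neutral, rule ballI)
      fix q assume q: "q \<in> {Suc n..k}"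
      then have "\<sigma> q (w q) \<in> F q" using step.prems(1) \<sigma>(2) by auto
      then show "\<phi> n (\<sigma> q (w q)) = 0" using phi0[where p=n and q=q and z="\<sigma> q (w q)"] q by auto
    qed
    also have "\<phi> n (\<sigma> n (w n)) = w n" using step.prems(1) nk \<sigma>(3) by auto
    finally have wn: "w n = 0" using step.prems(2) P.linear_0[OF lin] by simp
    then have "(\<Sum>q\<in>{Suc n..k}. \<sigma> q (w q)) = 0" using S step.prems(2) P.linear_0[OF \<sigma>(1)] by simp
    moreover have "\<forall>q\<in>{Suc n..k}. w q \<in> \<phi> q ` F q" using step.prems(1) by simp
    ultimately have "\<forall>q\<in>{Suc n..k}. w q = 0" using step.IH by blast
    then show ?case using wn by (metis atLeastAtMost_iff le_antisym not_less_eq_eq)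
  qed
  define \<Psi> where "\<Psi> w = (\<Sum>q\<in>{0..k}. \<sigma> q (w q))" for w
  let ?D = "dcar k (\<lambda>p. \<phi> p ` F p)"
  have inD: "w \<in> ?D \<longleftrightarrow> (\<forall>i\<le>k. w i \<in> \<phi> i ` F i) \<and> (\<forall>i. \<not> i \<le> k \<longrightarrow> w i = undefined)" for w
    by (auto simp: dcar_def)
  have diff0: "\<Psi> w = \<Psi> w' \<Longrightarrow> \<forall>q\<le>k. w q \<in> \<phi> q ` F q \<Longrightarrow> \<forall>q\<le>k. w' q \<in> \<phi> q ` F q \<Longrightarrow> \<forall>q\<le>k. w q = w' q" for w w'
  proof -
    assume e: "\<Psi> w = \<Psi> w'" and w: "\<forall>q\<le>k. w q \<in> \<phi> q ` F q" and w': "\<forall>q\<le>k. w' q \<in> \<phi> q ` F q"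
    have s: "(\<Sum>q\<in>{0..k}. \<sigma> q (w q - w' q)) = 0"
      using e unfolding \<Psi>_def P.linear_diff[OF \<sigma>(1)] sum_subtractf by simp
    have m: "\<forall>q\<in>{0..k}. w q - w' q \<in> \<phi> q ` F q" using w w' subG by (auto intro: subspace_diff)
    have "\<forall>q\<in>{0..k}. w q - w' q = 0" using inj[where p=0 and w="\<lambda>q. w q - w' q"] m s by simp
    then show ?thesis by auto
  qed
  have bij: "bij_betw \<Psi> ?D (F 0)"
  proof (rule bij_betwI')
    fix w w' assume "w \<in> ?D" "w' \<in> ?D"
    then show "(\<Psi> w = \<Psi> w') = (w = w')" using diff0[of w w'] by (auto simp: inD intro!: ext) (metis)
  next
    fix w assume "w \<in> ?D"
    then have a: "\<forall>i\<le>k. w i \<in> \<phi> i ` F i" by (simp add: inD)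
    show "\<Psi> w \<in> F 0" unfolding \<Psi>_def
    proof (intro subspace_sum[OF subF])
      fix q assume "q \<in> {0..k}"
      then have "\<sigma> q (w q) \<in> F q" using a \<sigma>(2) by auto
      then show "\<sigma> q (w q) \<in> F 0" using anti[of 0 q] by blast
    qed
  next
    fix z assume "z \<in> F 0"
    from dec[of F 0 z, OF subF top _ \<sigma>(2) \<sigma>(3)] this ker
    obtain w where w: "\<forall>q\<in>{0..k}. w q \<in> \<phi> q ` F q" "z = (\<Sum>q\<in>{0..k}. \<sigma> q (w q))" by auto
    define w2 where "w2 i = (if i \<in> {..k} then w i else undefined)" for i
    have "w2 \<in> ?D" using w by (auto simp: inD w2_def)
    moreover have "z = \<Psi> w2" unfolding w(2) \<Psi>_def by (rule sum.cong) (auto simp: w2_def)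
    ultimately show "\<exists>w\<in>?D. z = \<Psi> w" by blast
  qed
  have add: "\<Psi> (\<lambda>i. if i \<in> {..k} then w i + w' i else undefined) = \<Psi> w + \<Psi> w'" for w w'
    unfolding \<Psi>_def sum.distrib[symmetric] by (rule sum.cong) (auto simp: P.linear_add[OF \<sigma>(1)])
  have scl: "\<Psi> (\<lambda>i. if i \<in> {..k} then scale c (w i) else undefined) = scale c (\<Psi> w)" for c w
    unfolding \<Psi>_def scale_sum_right by (rule sum.cong) (auto simp: P.linear_scale[OF \<sigma>(1)])
  have iff: "\<Psi> w \<in> FB 0 \<longleftrightarrow> (\<forall>p\<in>{..k}. w p \<in> \<phi> p ` FB p)" if wD: "w \<in> ?D" for w
  proof
    assume a: "\<forall>p\<in>{..k}. w p \<in> \<phi> p ` FB p"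
    show "\<Psi> w \<in> FB 0" unfolding \<Psi>_def
    proof (intro subspace_sum[OF subFB])
      fix q assume "q \<in> {0..k}"
      then have "\<sigma> q (w q) \<in> FB q" using a \<sigma>(4) by auto
      then show "\<sigma> q (w q) \<in> FB 0" using FB[of q] by blast
    qed
  next
    assume b: "\<Psi> w \<in> FB 0"
    have topB: "FB (Suc k) = {0}" using FB[of "Suc k"] top subFB[of 0] by (auto simp: subspace_0)
    have kerB: "z \<in> FB (Suc p)" if "z \<in> FB p" "\<phi> p z = 0" for p z
      using that FB[of p] FB[of "Suc p"] ker by auto
    have s3: "\<phi> p (\<sigma> p u) = u" if "u \<in> \<phi> p ` FB p" for p u using that FBF \<sigma>(3) by blast
    from dec[of FB 0 "\<Psi> w", OF subFB topB kerB \<sigma>(4) s3 _ b]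
    obtain w' where w': "\<forall>q\<in>{0..k}. w' q \<in> \<phi> q ` FB q" "\<Psi> w = (\<Sum>q\<in>{0..k}. \<sigma> q (w' q))" by auto
    have "\<forall>q\<le>k. w q = w' q"
    proof (rule diff0)
      show "\<Psi> w = \<Psi> w'" using w'(2) by (simp add: \<Psi>_def)
      show "\<forall>q\<le>k. w q \<in> \<phi> q ` F q" using wD by (simp add: inD)
      show "\<forall>q\<le>k. w' q \<in> \<phi> q ` F q" using w'(1) image_mono[OF FBF] by fastforce
    qed
    then show "\<forall>p\<in>{..k}. w p \<in> \<phi> p ` FB p" using w' by auto
  qed
  show ?thesis using bij add scl iff by blast
qed

lemma coset_add:
  assumes "subspace Y"
  shows "{s + t |s t. s \<in> coset x Y \<and> t \<in> coset y Y} = coset (x + y) Y"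
proof (intro set_eqI iffI)
  fix v assume "v \<in> {s + t |s t. s \<in> coset x Y \<and> t \<in> coset y Y}"
  then obtain a b where "a \<in> Y" "b \<in> Y" "v = (x + a) + (y + b)" by (auto simp: coset_def)
  moreover have "a + b \<in> Y" using assms \<open>a \<in> Y\<close> \<open>b \<in> Y\<close> by (rule subspace_add)
  ultimately show "v \<in> coset (x + y) Y" unfolding coset_def
    by (auto intro!: image_eqI[where x="a + b"] simp: algebra_simps)
next
  fix v assume "v \<in> coset (x + y) Y"
  then obtain a where "a \<in> Y" "v = (x + y) + a" by (auto simp: coset_def)
  moreover have "x + a \<in> coset x Y" "y + 0 \<in> coset y Y" using \<open>a \<in> Y\<close> subspace_0[OF assms] by (auto simp: coset_def)
  moreover have "v = (x + a) + (y + 0)" using \<open>v = (x + y) + a\<close> by (simp add: algebra_simps)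
  ultimately show "v \<in> {s + t |s t. s \<in> coset x Y \<and> t \<in> coset y Y}" by blast
qed

lemma coset_scale:
  assumes "subspace Y"
  shows "{scale c s + t |s t. s \<in> coset x Y \<and> t \<in> Y} = coset (scale c x) Y"
proof (intro set_eqI iffI)
  fix v assume "v \<in> {scale c s + t |s t. s \<in> coset x Y \<and> t \<in> Y}"
  then obtain a b where "a \<in> Y" "b \<in> Y" "v = scale c (x + a) + b" by (auto simp: coset_def)
  moreover have "scale c a + b \<in> Y" using assms \<open>a \<in> Y\<close> \<open>b \<in> Y\<close> by (intro subspace_add subspace_scale)
  ultimately show "v \<in> coset (scale c x) Y" unfolding coset_def
    by (auto intro!: image_eqI[where x="scale c a + b"] simp: algebra_simps)
next
  fix v assume "v \<in> coset (scale c x) Y"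
  then obtain a where "a \<in> Y" "v = scale c x + a" by (auto simp: coset_def)
  moreover have "x + 0 \<in> coset x Y" using subspace_0[OF assms] by (auto simp: coset_def)
  moreover have "v = scale c (x + 0) + a" using \<open>v = scale c x + a\<close> by simp
  ultimately show "v \<in> {scale c s + t |s t. s \<in> coset x Y \<and> t \<in> Y}" by blast
qed

lemma coset_eq:
  assumes "subspace Y"
  shows "coset x Y = coset y Y \<longleftrightarrow> x - y \<in> Y"
proof
  assume "coset x Y = coset y Y"
  moreover have "x \<in> coset x Y" using subspace_0[OF assms] unfolding coset_def by (auto intro: image_eqI[where x=0])
  ultimately obtain a where "a \<in> Y" "x = y + a" by (auto simp: coset_def)
  then show "x - y \<in> Y" by simp
next
  assume a: "x - y \<in> Y"
  show "coset x Y = coset y Y"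
  proof (intro set_eqI iffI)
    fix v assume "v \<in> coset x Y"
    then obtain b where "b \<in> Y" "v = x + b" by (auto simp: coset_def)
    moreover have "(x - y) + b \<in> Y" using assms a \<open>b \<in> Y\<close> by (rule subspace_add)
    ultimately show "v \<in> coset y Y" unfolding coset_def by (auto intro!: image_eqI[where x="(x - y) + b"])
  next
    fix v assume "v \<in> coset y Y"
    then obtain b where "b \<in> Y" "v = y + b" by (auto simp: coset_def)
    moreover have "b - (x - y) \<in> Y" using assms \<open>b \<in> Y\<close> a by (rule subspace_diff)
    ultimately show "v \<in> coset x Y" unfolding coset_def by (auto intro!: image_eqI[where x="b - (x - y)"])
  qed
qed

lemma inv_props:
  assumes subG': "\<forall>p\<le>k. subspace (G p)"
   and bij: "bij_betw \<Psi> (dcar k G) Z"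
   and add: "\<forall>w\<in>dcar k G. \<forall>w'\<in>dcar k G. \<Psi> (\<lambda>i. if i \<in> {..k} then w i + w' i else undefined) = \<Psi> w + \<Psi> w'"
   and scl: "\<forall>c. \<forall>w\<in>dcar k G. \<Psi> (\<lambda>i. if i \<in> {..k} then scale c (w i) else undefined) = scale c (\<Psi> w)"
  shows "bij_betw (inv_into (dcar k G) \<Psi>) Z (dcar k G)"
    and "\<And>x y. x \<in> Z \<Longrightarrow> y \<in> Z \<Longrightarrow> inv_into (dcar k G) \<Psi> (x + y) = (\<lambda>i. if i \<in> {..k} then inv_into (dcar k G) \<Psi> x i + inv_into (dcar k G) \<Psi> y i else undefined)"
    and "\<And>c x. x \<in> Z \<Longrightarrow> inv_into (dcar k G) \<Psi> (scale c x) = (\<lambda>i. if i \<in> {..k} then scale c (inv_into (dcar k G) \<Psi> x i) else undefined)"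
proof -
  have subG: "subspace (G p)" if "p \<le> k" for p using subG' that by blast
  let ?D = "dcar k G"
  let ?\<Phi> = "inv_into ?D \<Psi>"
  show b: "bij_betw ?\<Phi> Z ?D" by (rule bij_betw_inv_into[OF bij])
  have r: "\<Psi> (?\<Phi> z) = z" if "z \<in> Z" for z using bij_betw_inv_into_right[OF bij that] .
  have l: "?\<Phi> (\<Psi> w) = w" if "w \<in> ?D" for w using bij_betw_inv_into_left[OF bij that] .
  have inD: "?\<Phi> z \<in> ?D" if "z \<in> Z" for z using b that by (auto simp: bij_betw_def)
  have cadd: "(\<lambda>i. if i \<in> {..k} then w i + w' i else undefined) \<in> ?D" if "w \<in> ?D" "w' \<in> ?D" for w w'
    using that subG by (auto simp: dcar_def intro: subspace_add)
  have cscl: "(\<lambda>i. if i \<in> {..k} then scale c (w i) else undefined) \<in> ?D" if "w \<in> ?D" for c w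
    using that subG by (auto simp: dcar_def intro: subspace_scale)
  show "?\<Phi> (x + y) = (\<lambda>i. if i \<in> {..k} then ?\<Phi> x i + ?\<Phi> y i else undefined)" if "x \<in> Z" "y \<in> Z" for x y
  proof -
    have "x + y = \<Psi> (\<lambda>i. if i \<in> {..k} then ?\<Phi> x i + ?\<Phi> y i else undefined)"
      using add inD[OF that(1)] inD[OF that(2)] r that by auto
    then have "?\<Phi> (x + y) = ?\<Phi> (\<Psi> (\<lambda>i. if i \<in> {..k} then ?\<Phi> x i + ?\<Phi> y i else undefined))" by simp
    also have "\<dots> = (\<lambda>i. if i \<in> {..k} then ?\<Phi> x i + ?\<Phi> y i else undefined)"
      by (rule l[OF cadd[OF inD[OF that(1)] inD[OF that(2)]]])
    finally show ?thesis .
  qed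
  show "?\<Phi> (scale c x) = (\<lambda>i. if i \<in> {..k} then scale c (?\<Phi> x i) else undefined)" if "x \<in> Z" for c x
  proof -
    have "scale c x = \<Psi> (\<lambda>i. if i \<in> {..k} then scale c (?\<Phi> x i) else undefined)"
      using scl inD[OF that] r that by auto
    then have "?\<Phi> (scale c x) = ?\<Phi> (\<Psi> (\<lambda>i. if i \<in> {..k} then scale c (?\<Phi> x i) else undefined))" by simp
    also have "\<dots> = (\<lambda>i. if i \<in> {..k} then scale c (?\<Phi> x i) else undefined)"
      by (rule l[OF cscl[OF inD[OF that]]])
    finally show ?thesis .
  qed
qed

lemma iso_sub:
  assumes subG: "\<And>p. p \<le> k \<Longrightarrow> subspace (G p)"
   and bij: "bij_betw \<Psi> (dcar k G) Z"
   and add: "\<forall>w\<in>dcar k G. \<forall>w'\<in>dcar k G. \<Psi> (\<lambda>i. if i \<in> {..k} then w i + w' i else undefined) = \<Psi> w + \<Psi> w'"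
   and scl: "\<forall>c. \<forall>w\<in>dcar k G. \<Psi> (\<lambda>i. if i \<in> {..k} then scale c (w i) else undefined) = scale c (\<Psi> w)"
  shows "iso_vs (vs_sub scale Z) (vs_dsum {..k} (\<lambda>p. vs_sub scale (G p)))"
proof -
  note P = inv_props[where k=k and G=G and \<Psi>=\<Psi> and Z=Z, OF _ bij add scl]
  have sG: "\<forall>p\<le>k. subspace (G p)" using subG by blast
  note P = P[OF sG]
  have D: "{f. (\<forall>i\<in>{..k}. f i \<in> G i) \<and> (\<forall>i. i \<notin> {..k} \<longrightarrow> f i = undefined)} = dcar k G"
    by (simp add: dcar_def)
  show ?thesis unfolding iso_vs_def vs_sub_def vs_dsum_def
    apply (simp only: prod.case fst_conv snd_conv D)
    using P by blast
qed

lemma iso_quot: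
  assumes subG: "\<And>p. p \<le> k \<Longrightarrow> subspace (G p)"
   and bij: "bij_betw \<Psi> (dcar k G) Z"
   and add: "\<forall>w\<in>dcar k G. \<forall>w'\<in>dcar k G. \<Psi> (\<lambda>i. if i \<in> {..k} then w i + w' i else undefined) = \<Psi> w + \<Psi> w'"
   and scl: "\<forall>c. \<forall>w\<in>dcar k G. \<Psi> (\<lambda>i. if i \<in> {..k} then scale c (w i) else undefined) = scale c (\<Psi> w)"
   and subZ: "subspace Z" and subB: "subspace B" and BZ: "B \<subseteq> Z"
   and subGB: "\<And>p. p \<le> k \<Longrightarrow> subspace (GB p)" and GBG: "\<And>p. p \<le> k \<Longrightarrow> GB p \<subseteq> G p"
   and iffB: "\<forall>w\<in>dcar k G. \<Psi> w \<in> B \<longleftrightarrow> (\<forall>p\<in>{..k}. w p \<in> GB p)"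
  shows "iso_vs (vs_quot scale Z B) (vs_dsum {..k} (\<lambda>p. vs_quot scale (G p) (GB p)))"
proof -
  let ?D = "dcar k G"
  define \<Phi> where "\<Phi> = inv_into ?D \<Psi>"
  note P = inv_props[where k=k and G=G and \<Psi>=\<Psi> and Z=Z, OF _ bij add scl]
  have sG: "\<forall>p\<le>k. subspace (G p)" using subG by blast
  note P = P[OF sG, folded \<Phi>_def]
  have r: "\<Psi> (\<Phi> z) = z" if "z \<in> Z" for z using bij_betw_inv_into_right[OF bij that] \<Phi>_def by simp
  have l: "\<Phi> (\<Psi> w) = w" if "w \<in> ?D" for w using bij_betw_inv_into_left[OF bij that] \<Phi>_def by simp
  have inD: "\<Phi> z \<in> ?D" if "z \<in> Z" for z using P(1) that by (auto simp: bij_betw_def)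
  have PhiG: "\<Phi> z p \<in> G p" if "z \<in> Z" "p \<le> k" for z p using inD[OF that(1)] that(2) by (auto simp: dcar_def)
  have inB: "z \<in> B \<longleftrightarrow> (\<forall>p\<le>k. \<Phi> z p \<in> GB p)" if "z \<in> Z" for z
    using iffB inD[OF that] r[OF that] by auto
  have Padd: "\<Phi> (x + y) p = \<Phi> x p + \<Phi> y p" if "x \<in> Z" "y \<in> Z" "p \<le> k" for x y p
    using P(2)[OF that(1,2)] that(3) by simp
  have Pscl: "\<Phi> (scale c x) p = scale c (\<Phi> x p)" if "x \<in> Z" "p \<le> k" for c x p
    using P(3)[OF that(1)] that(2) by simp
  have Pdiff: "\<Phi> (x - y) p = \<Phi> x p - \<Phi> y p" if "x \<in> Z" "y \<in> Z" "p \<le> k" for x y p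
  proof -
    have "x - y \<in> Z" using subZ that(1,2) by (rule subspace_diff)
    then have "\<Phi> ((x - y) + y) p = \<Phi> (x - y) p + \<Phi> y p" using Padd that by blast
    then show ?thesis by simp
  qed
  have key: "(\<lambda>z. \<Phi> z p) ` coset z B = coset (\<Phi> z p) (GB p)" if z: "z \<in> Z" and p: "p \<le> k" for z p
  proof (intro set_eqI iffI)
    fix v assume "v \<in> (\<lambda>z. \<Phi> z p) ` coset z B"
    then obtain b where b: "b \<in> B" "v = \<Phi> (z + b) p" by (auto simp: coset_def)
    then have "v = \<Phi> z p + \<Phi> b p" using Padd z p BZ by auto
    moreover have "\<Phi> b p \<in> GB p" using inB b BZ p by blast
    ultimately show "v \<in> coset (\<Phi> z p) (GB p)" by (auto simp: coset_def)
  next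
    fix v assume "v \<in> coset (\<Phi> z p) (GB p)"
    then obtain g where g: "g \<in> GB p" "v = \<Phi> z p + g" by (auto simp: coset_def)
    define w where "w i = (if i = p then g else if i \<in> {..k} then 0 else undefined)" for i
    have wD: "w \<in> ?D" using g GBG p subG by (auto simp: dcar_def w_def subspace_0)
    have "\<Psi> w \<in> B" using iffB wD g p subGB by (auto simp: w_def subspace_0)
    moreover have "\<Phi> (z + \<Psi> w) p = v" using Padd[OF z _ p, of "\<Psi> w"] l[OF wD] g bij wD
      by (auto simp: w_def bij_betw_def)
    ultimately show "v \<in> (\<lambda>z. \<Phi> z p) ` coset z B" by (auto simp: coset_def)
  qed
  define Fm where "Fm S = (\<lambda>p. if p \<in> {..k} then (\<lambda>z. \<Phi> z p) ` S else undefined)" for S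
  define Fc where "Fc z = (\<lambda>p. if p \<in> {..k} then coset (\<Phi> z p) (GB p) else undefined)" for z
  have FmFc: "Fm (coset z B) = Fc z" if "z \<in> Z" for z
    unfolding Fm_def Fc_def using key[OF that] by (intro ext) simp
  let ?A = "(\<lambda>x. coset x B) ` Z"
  let ?C = "{f. (\<forall>i\<in>{..k}. f i \<in> (\<lambda>x. coset x (GB i)) ` G i) \<and> (\<forall>i. i \<notin> {..k} \<longrightarrow> f i = undefined)}"
  have bijF: "bij_betw Fm ?A ?C"
    unfolding bij_betw_def
  proof (intro conjI)
    show "inj_on Fm ?A"
    proof (rule inj_onI, clarify)
      fix z z' assume z: "z \<in> Z" "z' \<in> Z" and e: "Fm (coset z B) = Fm (coset z' B)"
      then have "Fc z = Fc z'" using FmFc by simp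
      then have "\<forall>p\<le>k. \<Phi> z p - \<Phi> z' p \<in> GB p" using coset_eq subGB unfolding Fc_def by (metis atMost_iff)
      then have "\<forall>p\<le>k. \<Phi> (z - z') p \<in> GB p" using Pdiff z by simp
      moreover have "z - z' \<in> Z" using subZ z by (rule subspace_diff)
      ultimately have "z - z' \<in> B" using inB by blast
      then show "coset z B = coset z' B" using coset_eq[OF subB] by simp
    qed
    show "Fm ` ?A = ?C"
    proof (intro set_eqI iffI)
      fix f assume "f \<in> Fm ` ?A"
      then obtain z where "z \<in> Z" "f = Fc z" using FmFc by auto
      then show "f \<in> ?C" using PhiG by (auto simp: Fc_def)
    next
      fix f assume f: "f \<in> ?C"
      then have "\<forall>i\<in>{..k}. \<exists>x. x \<in> G i \<and> f i = coset x (GB i)" by blast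
      then obtain x where x: "\<forall>i\<in>{..k}. x i \<in> G i \<and> f i = coset (x i) (GB i)" by metis
      define w where "w i = (if i \<in> {..k} then x i else undefined)" for i
      have wD: "w \<in> ?D" using x by (auto simp: dcar_def w_def)
      have zZ: "\<Psi> w \<in> Z" using wD bij by (auto simp: bij_betw_def)
      have "Fc (\<Psi> w) = f" unfolding Fc_def l[OF wD] using x f by (intro ext) (auto simp: w_def)
      then show "f \<in> Fm ` ?A" using FmFc[OF zZ] zZ by (metis image_eqI)
    qed
  qed
  have Fadd: "Fm {s + t |s t. s \<in> X \<and> t \<in> Y} =
      (\<lambda>i. if i \<in> {..k} then {s + t |s t. s \<in> Fm X i \<and> t \<in> Fm Y i} else undefined)" if "X \<in> ?A" "Y \<in> ?A" for X Y
  proof -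
    from that obtain z z' where z: "z \<in> Z" "z' \<in> Z" "X = coset z B" "Y = coset z' B" by auto
    have zz: "z + z' \<in> Z" using subZ z by (intro subspace_add)
    have "{s + t |s t. s \<in> X \<and> t \<in> Y} = coset (z + z') B" using z coset_add[OF subB] by simp
    then have e: "Fm {s + t |s t. s \<in> X \<and> t \<in> Y} = Fc (z + z')" using FmFc[OF zz] by simp
    show ?thesis unfolding e unfolding z(3,4) FmFc[OF z(1)] FmFc[OF z(2)]
    proof (rule ext)
      fix i show "Fc (z + z') i = (if i \<in> {..k} then {s + t |s t. s \<in> Fc z i \<and> t \<in> Fc z' i} else undefined)"
        using Padd[OF z(1,2), of i] coset_add[OF subGB, of i "\<Phi> z i" "\<Phi> z' i"] by (simp add: Fc_def)
    qed
  qed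
  have Fscl: "Fm {scale c s + y |s y. s \<in> X \<and> y \<in> B} =
      (\<lambda>i. if i \<in> {..k} then {scale c s + y |s y. s \<in> Fm X i \<and> y \<in> GB i} else undefined)" if "X \<in> ?A" for c X
  proof -
    from that obtain z where z: "z \<in> Z" "X = coset z B" by auto
    have zz: "scale c z \<in> Z" using subZ z by (intro subspace_scale)
    have "{scale c s + y |s y. s \<in> X \<and> y \<in> B} = coset (scale c z) B" using z coset_scale[OF subB] by simp
    then have e: "Fm {scale c s + y |s y. s \<in> X \<and> y \<in> B} = Fc (scale c z)" using FmFc[OF zz] by simp
    show ?thesis unfolding e unfolding z(2) FmFc[OF z(1)]
    proof (rule ext)
      fix i show "Fc (scale c z) i = (if i \<in> {..k} then {scale c s + y |s y. s \<in> Fc z i \<and> y \<in> GB i} else undefined)"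
        using Pscl[OF z(1), of i c] coset_scale[OF subGB, of i c "\<Phi> z i"] by (simp add: Fc_def)
    qed
  qed
  show ?thesis unfolding iso_vs_def vs_quot_def vs_dsum_def
    apply (simp only: prod.case fst_conv snd_conv)
    using bijF Fadd Fscl by blast
qed

lemma filt_main:
  fixes F FB :: "nat \<Rightarrow> 'b set" and \<phi> :: "nat \<Rightarrow> 'b \<Rightarrow> 'b" and k :: nat
  assumes subF: "\<And>p. subspace (F p)" and subFB: "\<And>p. subspace (FB p)"
    and lin: "\<And>p. Vector_Spaces.linear scale scale (\<phi> p)"
    and mono: "\<And>p. F (Suc p) \<subseteq> F p"
    and FB: "\<And>p. FB p = F p \<inter> FB 0"
    and top: "F (Suc k) = {0}"
    and ker: "\<And>p z. z \<in> F p \<Longrightarrow> \<phi> p z = 0 \<longleftrightarrow> z \<in> F (Suc p)"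
    and G: "\<And>p. p \<le> k \<Longrightarrow> G p = \<phi> p ` F p" and GB: "\<And>p. p \<le> k \<Longrightarrow> GB p = \<phi> p ` FB p"
  shows "iso_vs (vs_sub scale (FB 0)) (vs_dsum {..k} (\<lambda>p. vs_sub scale (GB p)))"
    and "iso_vs (vs_sub scale (F 0)) (vs_dsum {..k} (\<lambda>p. vs_sub scale (G p)))"
    and "iso_vs (vs_quot scale (F 0) (FB 0)) (vs_dsum {..k} (\<lambda>p. vs_quot scale (G p) (GB p)))"
proof -
  interpret P: vector_space_pair scale scale ..
  have DG: "dcar k G = dcar k (\<lambda>p. \<phi> p ` F p)" using G by (auto simp: dcar_def)
  have DGB: "dcar k GB = dcar k (\<lambda>p. \<phi> p ` FB p)" using GB by (auto simp: dcar_def)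
  have subG: "subspace (G p)" if "p \<le> k" for p using G[OF that] P.linear_subspace_image[OF lin subF] by simp
  have subGB: "subspace (GB p)" if "p \<le> k" for p using GB[OF that] P.linear_subspace_image[OF lin subFB] by simp
  have GBG: "GB p \<subseteq> G p" if "p \<le> k" for p using G[OF that] GB[OF that] FB[of p] by auto
  obtain \<Psi> where \<Psi>: "bij_betw \<Psi> (dcar k (\<lambda>p. \<phi> p ` F p)) (F 0)"
     "\<forall>w\<in>dcar k (\<lambda>p. \<phi> p ` F p). \<forall>w'\<in>dcar k (\<lambda>p. \<phi> p ` F p).
           \<Psi> (\<lambda>i. if i \<in> {..k} then w i + w' i else undefined) = \<Psi> w + \<Psi> w'"
     "\<forall>c. \<forall>w\<in>dcar k (\<lambda>p. \<phi> p ` F p). \<Psi> (\<lambda>i. if i \<in> {..k} then scale c (w i) else undefined) = scale c (\<Psi> w)"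
     "\<forall>w\<in>dcar k (\<lambda>p. \<phi> p ` F p). \<Psi> w \<in> FB 0 \<longleftrightarrow> (\<forall>p\<in>{..k}. w p \<in> \<phi> p ` FB p)"
    using filt_core[OF subF subFB lin mono FB top ker] by blast
  have iffB: "\<forall>w\<in>dcar k G. \<Psi> w \<in> FB 0 \<longleftrightarrow> (\<forall>p\<in>{..k}. w p \<in> GB p)"
    using \<Psi>(4) GB unfolding DG by auto
  show "iso_vs (vs_sub scale (F 0)) (vs_dsum {..k} (\<lambda>p. vs_sub scale (G p)))"
    by (rule iso_sub[OF subG]) (use \<Psi> DG in auto)
  show "iso_vs (vs_quot scale (F 0) (FB 0)) (vs_dsum {..k} (\<lambda>p. vs_quot scale (G p) (GB p)))"
  proof (rule iso_quot[OF subG])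
    show "bij_betw \<Psi> (dcar k G) (F 0)" using \<Psi>(1) DG by simp
    show "\<forall>w\<in>dcar k G. \<forall>w'\<in>dcar k G. \<Psi> (\<lambda>i. if i \<in> {..k} then w i + w' i else undefined) = \<Psi> w + \<Psi> w'"
      using \<Psi>(2) DG by simp
    show "\<forall>c. \<forall>w\<in>dcar k G. \<Psi> (\<lambda>i. if i \<in> {..k} then scale c (w i) else undefined) = scale c (\<Psi> w)"
      using \<Psi>(3) DG by simp
    show "FB 0 \<subseteq> F 0" using FB[of 0] by blast
  qed (use subF subFB subGB GBG iffB in auto)
  have monoB: "FB (Suc p) \<subseteq> FB p" for p using FB[of p] FB[of "Suc p"] mono[of p] by blast
  have FBB: "FB p = FB p \<inter> FB 0" for p using FB[of p] by blast
  have topB: "FB (Suc k) = {0}" using FB[of "Suc k"] top subspace_0[OF subFB[of 0]] by auto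
  have kerB: "\<phi> p z = 0 \<longleftrightarrow> z \<in> FB (Suc p)" if "z \<in> FB p" for p z
    using that FB[of p] FB[of "Suc p"] ker[of z p] by auto
  obtain \<Psi>B where \<Psi>B: "bij_betw \<Psi>B (dcar k (\<lambda>p. \<phi> p ` FB p)) (FB 0)"
     "\<forall>w\<in>dcar k (\<lambda>p. \<phi> p ` FB p). \<forall>w'\<in>dcar k (\<lambda>p. \<phi> p ` FB p).
           \<Psi>B (\<lambda>i. if i \<in> {..k} then w i + w' i else undefined) = \<Psi>B w + \<Psi>B w'"
     "\<forall>c. \<forall>w\<in>dcar k (\<lambda>p. \<phi> p ` FB p). \<Psi>B (\<lambda>i. if i \<in> {..k} then scale c (w i) else undefined) = scale c (\<Psi>B w)"
    using filt_core[OF subFB subFB lin monoB FBB topB kerB] by blast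
  show "iso_vs (vs_sub scale (FB 0)) (vs_dsum {..k} (\<lambda>p. vs_sub scale (GB p)))"
    by (rule iso_sub[OF subGB]) (use \<Psi>B DGB in auto)
qed

end


definition supp_set :: "(nat \<Rightarrow> nat \<Rightarrow> bool) \<Rightarrow> (nat \<Rightarrow> nat \<Rightarrow> 'v::zero) set" where
  "supp_set P = {x. \<forall>p q. x p q \<noteq> 0 \<longrightarrow> P p q}"

definition Sf :: "nat \<Rightarrow> (nat \<Rightarrow> nat \<Rightarrow> 'v::zero) set" where
  "Sf p = supp_set (\<lambda>p' j. p \<le> p')"

lemma single_0[simp]: "single a b 0 = 0"
  by (simp add: single_def fun_eq_iff)

locale bgc =
  fixes sc :: "'r::field \<Rightarrow> 'v::ab_group_add \<Rightarrow> 'v"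
    and Cs :: "nat \<Rightarrow> nat \<Rightarrow> 'v set"
    and d :: "(nat \<Rightarrow> nat \<Rightarrow> 'v) \<Rightarrow> nat \<Rightarrow> nat \<Rightarrow> 'v"
  assumes bgc: "bigraded_complex sc Cs d"
begin

lemma vs: "vector_space sc" using bgc by (simp add: bigraded_complex_def)

sublocale S: vector_space sc by (rule vs)

lemma C0: "0 \<in> Cs p q" and Cadd: "x \<in> Cs p q \<Longrightarrow> y \<in> Cs p q \<Longrightarrow> x + y \<in> Cs p q"
  and Cscl: "x \<in> Cs p q \<Longrightarrow> sc c x \<in> Cs p q"
  using bgc by (auto simp: bigraded_complex_def)

lemma dtot: "x \<in> tot Cs \<Longrightarrow> d x \<in> tot Cs"
  and dadd: "x \<in> tot Cs \<Longrightarrow> y \<in> tot Cs \<Longrightarrow> d (x + y) = d x + d y"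
  and dscl: "x \<in> tot Cs \<Longrightarrow> d (scaleC sc c x) = scaleC sc c (d x)"
  and dCk: "x \<in> Ck Cs k \<Longrightarrow> d x \<in> Ck Cs (Suc k)"
  and dd: "x \<in> tot Cs \<Longrightarrow> d (d x) = 0"
  using bgc unfolding bigraded_complex_def by blast+

sublocale V: vector_space "scaleC sc"
  by unfold_locales (simp_all add: scaleC_def fun_eq_iff S.scale_right_distrib S.scale_left_distrib)

lemma tot_sub: "V.subspace (tot Cs)"
proof -
  have a: "finite {(p, q). (x + y) p q \<noteq> 0}" if "finite {(p, q). x p q \<noteq> 0}" "finite {(p, q). y p q \<noteq> 0}" for x y :: "nat \<Rightarrow> nat \<Rightarrow> 'v"
    by (rule finite_subset[OF _ finite_UnI[OF that]]) auto
  have b: "finite {(p, q). scaleC sc c x p q \<noteq> 0}" if "finite {(p, q). x p q \<noteq> 0}" for c x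
    by (rule finite_subset[OF _ that]) (auto simp: scaleC_def)
  show ?thesis unfolding V.subspace_def tot_def
    using a b C0 Cadd Cscl by (auto simp: scaleC_def)
qed

lemma supp_sub: "V.subspace (supp_set P)"
  unfolding V.subspace_def supp_set_def scaleC_def
  by (auto simp: fun_eq_iff) (metis add.right_neutral)+

lemma Ck_eq: "Ck Cs k = tot Cs \<inter> supp_set (\<lambda>p q. p + q = k)"
  by (auto simp: Ck_def supp_set_def)

lemma Ck_sub: "V.subspace (Ck Cs k)"
  unfolding Ck_eq by (intro V.subspace_inter tot_sub supp_sub)

lemma Ck_tot: "Ck Cs k \<subseteq> tot Cs" by (auto simp: Ck_def)

lemma d0: "d 0 = 0"
proof -
  have "d (0 + 0) = d 0 + d 0" using dadd V.subspace_0[OF tot_sub] by blast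
  then show ?thesis by simp
qed

lemma ddiff: "x \<in> tot Cs \<Longrightarrow> y \<in> tot Cs \<Longrightarrow> d (x - y) = d x - d y"
proof -
  assume xy: "x \<in> tot Cs" "y \<in> tot Cs"
  have "x - y \<in> tot Cs" using V.subspace_diff[OF tot_sub xy] .
  then have "d ((x - y) + y) = d (x - y) + d y" using dadd xy by blast
  then show ?thesis by simp
qed

lemma dsum: "(\<And>i. i \<in> A \<Longrightarrow> f i \<in> tot Cs) \<Longrightarrow> d (\<Sum>i\<in>A. f i) = (\<Sum>i\<in>A. d (f i))"
proof (induction A rule: infinite_finite_induct)
  case (infinite A) then show ?case by (simp only: sum.infinite[OF infinite.hyps] d0)
next
  case empty then show ?case by (simp only: sum.empty d0)
next
  case (insert a A)
  have "(\<Sum>i\<in>A. f i) \<in> tot Cs" using insert.prems by (intro V.subspace_sum[OF tot_sub]) auto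
  have fa: "f a \<in> tot Cs" using insert.prems by auto
  have "d (\<Sum>i\<in>insert a A. f i) = d (f a + (\<Sum>i\<in>A. f i))" by (simp only: sum.insert[OF insert.hyps(1,2)])
  also have "\<dots> = d (f a) + d (\<Sum>i\<in>A. f i)" by (rule dadd[OF fa \<open>(\<Sum>i\<in>A. f i) \<in> tot Cs\<close>])
  also have "d (\<Sum>i\<in>A. f i) = (\<Sum>i\<in>A. d (f i))" using insert.IH insert.prems by auto
  finally show ?case by (simp only: sum.insert[OF insert.hyps(1,2)])
qed

lemma img_sub: "V.subspace X \<Longrightarrow> X \<subseteq> tot Cs \<Longrightarrow> V.subspace (d ` X)"
  unfolding V.subspace_def
proof (intro conjI ballI allI)
  assume X: "0 \<in> X \<and> (\<forall>x\<in>X. \<forall>y\<in>X. x + y \<in> X) \<and> (\<forall>c. \<forall>x\<in>X. scaleC sc c x \<in> X)" "X \<subseteq> tot Cs"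
  show "0 \<in> d ` X" using X d0 by (metis image_eqI)
  show "x + y \<in> d ` X" if "x \<in> d ` X" "y \<in> d ` X" for x y
    using that X dadd by (smt (verit, best) image_iff subsetD)
  show "scaleC sc c x \<in> d ` X" if "x \<in> d ` X" for c x
    using that X dscl by (smt (verit, best) image_iff subsetD)
qed

lemma Bk_eq: "Bk Cs d k = d ` (tot Cs \<inter> supp_set (\<lambda>p q. Suc (p + q) = k))"
  by (auto simp: Bk_def supp_set_def)

lemma Bk_sub: "V.subspace (Bk Cs d k)"
  unfolding Bk_eq by (intro img_sub V.subspace_inter tot_sub supp_sub) auto

lemma Bk_Ck: "Bk Cs d k \<subseteq> Ck Cs k"
proof
  fix y assume "y \<in> Bk Cs d k"
  then obtain x where x: "x \<in> tot Cs" "\<forall>p q. x p q \<noteq> 0 \<longrightarrow> Suc (p + q) = k" "y = d x" by (auto simp: Bk_def)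
  show "y \<in> Ck Cs k"
  proof (cases k)
    case 0
    then have "x = 0" using x by (auto simp: fun_eq_iff)
    then show ?thesis using x d0 V.subspace_0[OF Ck_sub] by simp
  next
    case (Suc m)
    then have "x \<in> Ck Cs m" using x by (auto simp: Ck_def)
    then show ?thesis using dCk x Suc by simp
  qed
qed

lemma Zk_sub: "V.subspace (Zk Cs d k)"
  unfolding V.subspace_def
proof (intro conjI ballI allI)
  show "0 \<in> Zk Cs d k" using V.subspace_0[OF Ck_sub] d0 by (simp add: Zk_def)
  show "x + y \<in> Zk Cs d k" if "x \<in> Zk Cs d k" "y \<in> Zk Cs d k" for x y
  proof -
    have t: "x \<in> tot Cs" "y \<in> tot Cs" using that Ck_tot by (auto simp: Zk_def)
    have "d (x + y) = 0" using dadd[OF t] that by (simp add: Zk_def)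
    then show ?thesis using that V.subspace_add[OF Ck_sub] by (auto simp: Zk_def)
  qed
  show "scaleC sc c x \<in> Zk Cs d k" if "x \<in> Zk Cs d k" for c x
  proof -
    have t: "x \<in> tot Cs" using that Ck_tot by (auto simp: Zk_def)
    have "d (scaleC sc c x) = scaleC sc c (d x)" by (rule dscl[OF t])
    also have "\<dots> = scaleC sc c 0" using that by (simp add: Zk_def)
    also have "\<dots> = 0" by (simp add: scaleC_def fun_eq_iff)
    finally show ?thesis using that V.subspace_scale[OF Ck_sub] by (auto simp: Zk_def)
  qed
qed

lemma Bk_Zk: "Bk Cs d k \<subseteq> Zk Cs d k"
  using Bk_Ck by (auto simp: Zk_def Bk_def dd)

lemma piq_lin: "Vector_Spaces.linear (scaleC sc) (scaleC sc) (piq q)"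
  unfolding Vector_Spaces.linear_iff using V.vector_space_axioms
  by (auto simp: piq_def scaleC_def fun_eq_iff)

lemma Sf_sub: "V.subspace (Sf p)" unfolding Sf_def by (rule supp_sub)
lemma Sf0: "Sf 0 = UNIV" by (auto simp: Sf_def supp_set_def)
lemma Sf_mono: "Sf (Suc p) \<subseteq> Sf p" by (auto simp: Sf_def supp_set_def)

lemma top_gen: "V \<subseteq> Ck Cs k \<Longrightarrow> 0 \<in> V \<Longrightarrow> V \<inter> Sf (Suc k) = {0}"
proof (intro equalityI subsetI)
  fix x assume V: "V \<subseteq> Ck Cs k" and x: "x \<in> V \<inter> Sf (Suc k)"
  then have a: "\<forall>p q. x p q \<noteq> 0 \<longrightarrow> p + q = k" and b: "\<forall>p q. x p q \<noteq> 0 \<longrightarrow> Suc k \<le> p"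
    by (auto simp: Ck_def Sf_def supp_set_def)
  have "x p q = 0" for p q
  proof (rule ccontr)
    assume "x p q \<noteq> 0" then show False using a b by fastforce
  qed
  then show "x \<in> {0}" by (auto simp: fun_eq_iff)
next
  fix x :: "nat \<Rightarrow> nat \<Rightarrow> 'v" assume "0 \<in> V" "x \<in> {0}"
  then show "x \<in> V \<inter> Sf (Suc k)" by (auto simp: Sf_def supp_set_def)
qed

lemma ker_gen:
  assumes V: "V \<subseteq> Ck Cs k" and z: "z \<in> V \<inter> Sf p"
  shows "piq (k - p) z = 0 \<longleftrightarrow> z \<in> V \<inter> Sf (Suc p)"
proof -
  have ck: "\<forall>a b. z a b \<noteq> 0 \<longrightarrow> a + b = k" using V z by (auto simp: Ck_def)
  have sp: "\<forall>a b. z a b \<noteq> 0 \<longrightarrow> p \<le> a" using z by (auto simp: Sf_def supp_set_def)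
  have "piq (k - p) z = 0 \<longleftrightarrow> (\<forall>a b. k - p \<le> b \<longrightarrow> z a b = 0)"
    by (auto simp: piq_def fun_eq_iff)
  also have "\<dots> \<longleftrightarrow> (\<forall>a b. z a b \<noteq> 0 \<longrightarrow> Suc p \<le> a)"
  proof
    assume h: "\<forall>a b. k - p \<le> b \<longrightarrow> z a b = 0"
    show "\<forall>a b. z a b \<noteq> 0 \<longrightarrow> Suc p \<le> a"
    proof (intro allI impI)
      fix a b assume nz: "z a b \<noteq> 0"
      then have "a + b = k" "p \<le> a" using ck sp by auto
      moreover have "\<not> k - p \<le> b" using h nz by auto
      ultimately show "Suc p \<le> a" by arith
    qed
  next
    assume h: "\<forall>a b. z a b \<noteq> 0 \<longrightarrow> Suc p \<le> a"
    show "\<forall>a b. k - p \<le> b \<longrightarrow> z a b = 0"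
    proof (intro allI impI)
      fix a b assume b: "k - p \<le> b"
      show "z a b = 0"
      proof (rule ccontr)
        assume nz: "z a b \<noteq> 0"
        then have "a + b = k" "Suc p \<le> a" using ck h by auto
        then show False using b by arith
      qed
    qed
  qed
  also have "\<dots> \<longleftrightarrow> z \<in> V \<inter> Sf (Suc p)" using z by (auto simp: Sf_def supp_set_def)
  finally show ?thesis .
qed

lemma piq_tot: "v \<in> tot Cs \<Longrightarrow> piq q v \<in> tot Cs"
  unfolding tot_def piq_def using C0
  by (auto intro: finite_subset[of _ "{(p, q). v p q \<noteq> 0}"])

lemma to_Cpq:
  assumes V: "V \<subseteq> Ck Cs k" and v: "v \<in> V \<inter> Sf p"
  shows "piq (k - p) v \<in> Cpq Cs p (k - p)"
proof -
  have ck: "\<forall>a b. v a b \<noteq> 0 \<longrightarrow> a + b = k" "v \<in> tot Cs" using V v by (auto simp: Ck_def)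
  have sp: "\<forall>a b. v a b \<noteq> 0 \<longrightarrow> p \<le> a" using v by (auto simp: Sf_def supp_set_def)
  have "piq (k - p) v a b = 0" if "(a, b) \<noteq> (p, k - p)" for a b
  proof (rule ccontr)
    assume nz: "piq (k - p) v a b \<noteq> 0"
    then have "k - p \<le> b" "v a b \<noteq> 0" by (auto simp: piq_def split: if_splits)
    then show False using ck sp that by fastforce
  qed
  then show ?thesis using piq_tot[OF ck(2)] by (auto simp: Cpq_def)
qed

lemma from_Cpq:
  assumes v: "v \<in> Ck Cs k" and c: "piq (k - p) v \<in> Cpq Cs p (k - p)"
  shows "v \<in> Sf p"
proof -
  have ck: "\<forall>a b. v a b \<noteq> 0 \<longrightarrow> a + b = k" using v by (auto simp: Ck_def)
  have "p \<le> a" if nz: "v a b \<noteq> 0" for a b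
  proof (rule ccontr)
    assume "\<not> p \<le> a"
    moreover have "a + b = k" using ck nz by auto
    ultimately have "k - p \<le> b" "(a, b) \<noteq> (p, k - p)" by auto
    then have "piq (k - p) v a b = 0" using c by (auto simp: Cpq_def)
    then show False using nz \<open>k - p \<le> b\<close> by (simp add: piq_def)
  qed
  then show ?thesis by (auto simp: Sf_def supp_set_def)
qed

lemma GB_eq:
  assumes p: "p \<le> k"
  shows "Bkq Cs d k (k - p) \<inter> Cpq Cs p (k - p) = piq (k - p) ` (Bk Cs d k \<inter> Sf p)"
proof (intro equalityI subsetI)
  fix x assume "x \<in> Bkq Cs d k (k - p) \<inter> Cpq Cs p (k - p)"
  then obtain b where b: "b \<in> Bk Cs d k" "x = piq (k - p) b" "x \<in> Cpq Cs p (k - p)" by (auto simp: Bkq_def)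
  then have "b \<in> Sf p" using from_Cpq[of b k p] Bk_Ck by auto
  then show "x \<in> piq (k - p) ` (Bk Cs d k \<inter> Sf p)" using b by auto
next
  fix x assume "x \<in> piq (k - p) ` (Bk Cs d k \<inter> Sf p)"
  then obtain b where b: "b \<in> Bk Cs d k \<inter> Sf p" "x = piq (k - p) b" by auto
  then show "x \<in> Bkq Cs d k (k - p) \<inter> Cpq Cs p (k - p)"
    using to_Cpq[OF Bk_Ck b(1)] by (auto simp: Bkq_def)
qed

lemma d0': "d (\<lambda>a b. 0) = (\<lambda>a b. 0)" using d0 by (simp add: zero_fun_def)

lemma Zk_Ck: "Zk Cs d k \<subseteq> Ck Cs k" by (auto simp: Zk_def)

lemma Cpq_Ck: "a + b = k \<Longrightarrow> Cpq Cs a b \<subseteq> Ck Cs k"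
  by (auto simp: Cpq_def Ck_def)

lemma zero_Cpq: "0 \<in> Cpq Cs a b"
  using V.subspace_0[OF tot_sub] by (auto simp: Cpq_def)

lemma zero_BN: "0 \<in> BN Cs d j (Suc k)"
proof -
  have "0 \<in> Nq_deg Cs d j k"
  proof (cases "j \<le> k")
    case True
    have "dij d i l 0 = 0" for i l
      unfolding dij_def by (rule ext, rule ext) (simp add: d0)
    then show ?thesis using True zero_Cpq by (simp add: Nq_deg_def Npq_def)
  next
    case False then show ?thesis by (simp add: Nq_deg_def)
  qed
  then have "d 0 \<in> BN Cs d j (Suc k)" by (simp add: BN_def)
  then show ?thesis by (simp add: d0)
qed

lemma G_eq:
  assumes p: "p \<le> k"
  shows "Zkq Cs d k (k - p) \<inter> Cpq Cs p (k - p) = piq (k - p) ` (Zk Cs d k \<inter> Sf p)"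
proof (intro equalityI subsetI)
  fix x assume x: "x \<in> Zkq Cs d k (k - p) \<inter> Cpq Cs p (k - p)"
  define q where "q = k - p"
  have qk: "q \<le> k" by (simp add: q_def)
  from x obtain \<eta> where \<eta>: "\<eta> \<in> Mk Cs d k" "piq q (d \<eta>) = 0" "x = piq q \<eta>" "x \<in> Cpq Cs p q"
    by (auto simp: Zkq_def q_def)
  have \<eta>C: "\<eta> \<in> Ck Cs k" using \<eta>(1) by (simp add: Mk_def)
  have \<eta>t: "\<eta> \<in> tot Cs" using \<eta>C Ck_tot by auto
  have d\<eta>C: "d \<eta> \<in> Ck Cs (Suc k)" by (rule dCk[OF \<eta>C])
  have ex: "\<exists>m. j < q \<longrightarrow> (m \<in> Cpq Cs (k - j) j \<and> d m = single (Suc k - j) j (d \<eta> (Suc k - j) j))" for j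
  proof (cases "j < q")
    case True
    have "(Suc k - j) + j = Suc k" using True qk by simp
    then have "single (Suc k - j) j (d \<eta> (Suc k - j) j) \<in> BN Cs d j (Suc k)" using \<eta>(1) by (auto simp: Mk_def)
    moreover have "j \<le> k" using True qk by simp
    ultimately obtain m where "m \<in> Npq Cs d (k - j) j" "single (Suc k - j) j (d \<eta> (Suc k - j) j) = d m"
      by (auto simp: BN_def Nq_deg_def)
    then show ?thesis by (auto simp: Npq_def)
  qed simp
  then have "\<exists>n. \<forall>j. j < q \<longrightarrow> (n j \<in> Cpq Cs (k - j) j \<and> d (n j) = single (Suc k - j) j (d \<eta> (Suc k - j) j))"
    by (rule choice[OF allI])
  then obtain n where n: "\<And>j. j < q \<Longrightarrow> n j \<in> Cpq Cs (k - j) j"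
    "\<And>j. j < q \<Longrightarrow> d (n j) = single (Suc k - j) j (d \<eta> (Suc k - j) j)" by blast
  have nC: "n j \<in> Ck Cs k" if "j < q" for j
    using n(1)[OF that] Cpq_Ck[of "k - j" j k] that qk by auto
  define z where "z = \<eta> - (\<Sum>j<q. n j)"
  have sC: "(\<Sum>j<q. n j) \<in> Ck Cs k" by (rule V.subspace_sum[OF Ck_sub]) (use nC in auto)
  have zC: "z \<in> Ck Cs k" unfolding z_def by (rule V.subspace_diff[OF Ck_sub \<eta>C sC])
  have "d z = d \<eta> - d (\<Sum>j<q. n j)" unfolding z_def using ddiff[OF \<eta>t] sC Ck_tot by auto
  also have "d (\<Sum>j<q. n j) = (\<Sum>j<q. d (n j))" using dsum[of "{..<q}" n] nC Ck_tot by auto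
  also have "(\<Sum>j<q. d (n j)) = d \<eta>"
  proof (rule ext, rule ext)
    fix a b
    have "(\<Sum>j<q. d (n j)) a b = (\<Sum>j<q. d (n j) a b)" by (simp only: sum_fun_apply2)
    also have "\<dots> = (\<Sum>j<q. if j = b then (if a = Suc k - b then d \<eta> a b else 0) else 0)"
      by (rule sum.cong) (auto simp: n(2) single_def)
    also have "\<dots> = (if b < q then (if a = Suc k - b then d \<eta> a b else 0) else 0)"
      by (simp add: sum.delta)
    also have "\<dots> = d \<eta> a b"
    proof (cases "b < q")
      case True
      have "d \<eta> a b = 0" if "a \<noteq> Suc k - b"
      proof (rule ccontr)
        assume "d \<eta> a b \<noteq> 0"
        then have "a + b = Suc k" using d\<eta>C by (auto simp: Ck_def)
        then show False using that by auto
      qed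
      then show ?thesis using True by auto
    next
      case False
      then have "piq q (d \<eta>) a b = d \<eta> a b" by (simp add: piq_def)
      then show ?thesis using False \<eta>(2) by simp
    qed
    finally show "(\<Sum>j<q. d (n j)) a b = d \<eta> a b" .
  qed
  finally have dz: "d z = 0" by (simp only: diff_self)
  have zZ: "z \<in> Zk Cs d k" using zC dz by (simp add: Zk_def)
  have pz: "piq q z = piq q \<eta>"
  proof (rule ext, rule ext)
    fix a b
    have e: "(\<Sum>j<q. n j) a b = (\<Sum>j<q. n j a b)" by (simp only: sum_fun_apply2)
    have "(\<Sum>j<q. n j a b) = 0" if "q \<le> b"
    proof (rule sum.neutral, rule ballI)
      fix j assume "j \<in> {..<q}"
      then have "n j \<in> Cpq Cs (k - j) j" "j \<noteq> b" using n(1) that by auto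
      then show "n j a b = 0" by (auto simp: Cpq_def)
    qed
    then show "piq q z a b = piq q \<eta> a b" using e by (simp add: piq_def z_def)
  qed
  have "z \<in> Sf p" using from_Cpq[OF zC] pz \<eta>(3,4) q_def by simp
  then show "x \<in> piq (k - p) ` (Zk Cs d k \<inter> Sf p)" using zZ pz \<eta>(3) q_def by (metis IntI image_eqI)
next
  fix x assume "x \<in> piq (k - p) ` (Zk Cs d k \<inter> Sf p)"
  then obtain z where z: "z \<in> Zk Cs d k \<inter> Sf p" "x = piq (k - p) z" by auto
  have zC: "z \<in> Ck Cs k" and dz: "d z = 0" using z by (auto simp: Zk_def)
  have "z \<in> Mk Cs d k" using zC dz zero_BN by (auto simp: Mk_def)
  moreover have "piq (k - p) (d z) = 0" using dz by (simp add: piq_def fun_eq_iff)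
  ultimately have "x \<in> Zkq Cs d k (k - p)" using z by (auto simp: Zkq_def)
  moreover have "x \<in> Cpq Cs p (k - p)" using to_Cpq[OF Zk_Ck z(1)] z(2) by simp
  ultimately show "x \<in> Zkq Cs d k (k - p) \<inter> Cpq Cs p (k - p)" by simp
qed

lemma main:
  shows "iso_vs (vs_sub (scaleC sc) (Bk Cs d k))
           (vs_dsum {..k} (\<lambda>p. vs_sub (scaleC sc) (Bkq Cs d k (k - p) \<inter> Cpq Cs p (k - p))))
       \<and> iso_vs (vs_sub (scaleC sc) (Zk Cs d k))
           (vs_dsum {..k} (\<lambda>p. vs_sub (scaleC sc) (Zkq Cs d k (k - p) \<inter> Cpq Cs p (k - p))))
       \<and> iso_vs (vs_quot (scaleC sc) (Zk Cs d k) (Bk Cs d k))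
           (vs_dsum {..k} (\<lambda>p. vs_quot (scaleC sc) (Zkq Cs d k (k - p) \<inter> Cpq Cs p (k - p))
                                              (Bkq Cs d k (k - p) \<inter> Cpq Cs p (k - p))))"
proof -
  have subF: "V.subspace (Zk Cs d k \<inter> Sf p)" for p by (intro V.subspace_inter Zk_sub Sf_sub)
  have subFB: "V.subspace (Bk Cs d k \<inter> Sf p)" for p by (intro V.subspace_inter Bk_sub Sf_sub)
  have mono: "Zk Cs d k \<inter> Sf (Suc p) \<subseteq> Zk Cs d k \<inter> Sf p" for p using Sf_mono by blast
  have FB: "Bk Cs d k \<inter> Sf p = (Zk Cs d k \<inter> Sf p) \<inter> (Bk Cs d k \<inter> Sf 0)" for p
    using Bk_Zk Sf0 by blast
  have top: "Zk Cs d k \<inter> Sf (Suc k) = {0}" by (rule top_gen[OF Zk_Ck V.subspace_0[OF Zk_sub]])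
  have ker: "piq (k - p) z = 0 \<longleftrightarrow> z \<in> Zk Cs d k \<inter> Sf (Suc p)" if "z \<in> Zk Cs d k \<inter> Sf p" for p z
    by (rule ker_gen[OF Zk_Ck that])
  note R = V.filt_main[where F="\<lambda>p. Zk Cs d k \<inter> Sf p" and FB="\<lambda>p. Bk Cs d k \<inter> Sf p"
      and \<phi>="\<lambda>p. piq (k - p)" and k=k
      and G="\<lambda>p. Zkq Cs d k (k - p) \<inter> Cpq Cs p (k - p)"
      and GB="\<lambda>p. Bkq Cs d k (k - p) \<inter> Cpq Cs p (k - p)",
      OF subF subFB piq_lin mono FB top ker G_eq GB_eq]
  show ?thesis using R by (simp add: Sf0)
qed

end

theorem corollary3p4:
  fixes sc :: "'r::field \<Rightarrow> 'v::ab_group_add \<Rightarrow> 'v"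
    and Cs :: "nat \<Rightarrow> nat \<Rightarrow> 'v set"
    and d :: "(nat \<Rightarrow> nat \<Rightarrow> 'v) \<Rightarrow> nat \<Rightarrow> nat \<Rightarrow> 'v"
    and k :: nat
  assumes "bigraded_complex sc Cs d"
  shows "iso_vs (vs_sub (scaleC sc) (Bk Cs d k))
           (vs_dsum {..k} (\<lambda>p. vs_sub (scaleC sc) (Bkq Cs d k (k - p) \<inter> Cpq Cs p (k - p))))
       \<and> iso_vs (vs_sub (scaleC sc) (Zk Cs d k))
           (vs_dsum {..k} (\<lambda>p. vs_sub (scaleC sc) (Zkq Cs d k (k - p) \<inter> Cpq Cs p (k - p))))
       \<and> iso_vs (vs_quot (scaleC sc) (Zk Cs d k) (Bk Cs d k))
           (vs_dsum {..k} (\<lambda>p. vs_quot (scaleC sc) (Zkq Cs d k (k - p) \<inter> Cpq Cs p (k - p))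
                                              (Bkq Cs d k (k - p) \<inter> Cpq Cs p (k - p))))"
proof -
  interpret bgc sc Cs d by (rule bgc.intro[OF assms])
  show ?thesis by (rule main)
qed

end
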